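(* In a combinatorial auction with single-dimensional signals $s_i\in\{0,1,\dots,k-1\}$ ($k\ge2$) and SOS valuations, fix a true signal profile $\mathbf{s}$ (reported truthfully) and a welfare-maximizing allocation $T^*=(T_i^* )_i$ at $\mathbf{s}$. Then the expected welfare $\mathbb{E}[\sum_i v_{i\bar T_i}(\mathbf{s})]$ of the Random Threshold mechanism is at least $\frac{1}{k-1}\mathsf{SELF}$, where $\mathsf{SELF}=\sum_{\ell=1}^{k-1}\sum_{i:s_i=\ell}v_{iT_i^*}(\mathbf{0}_{-i},s_i)$.
   Context: Setting: $n$ agents, $m$ items; agent $i$ has private signal $s_i$; her value for bundle $T\subseteq[m]$ is $v_{iT}(\mathbf{s})\ge0$, a public function of $\mathbf{s}=(s_1,\dots,s_n)$, weakly increasing in each coordinate and strictly increasing in $s_i$; each $v_{iT}$ is SOS. An allocation assigns disjoint bundles. SOS: for every coordinate $j$, $s_j$, $\delta\ge0$, and $\mathbf{s}'_{-j}\le\mathbf{s}_{-j}$ coordinate-wise, $v(\mathbf{s}'_{-j},s_j+\delta)-v(\mathbf{s}'_{-j},s_j)\ge v(\mathbf{s}_{-j},s_j+\delta)-v(\mathbf{s}_{-j},s_j)$. $(\mathbf{0}_{-i},s_i)$ is the profile with all signals except $i$'s set to $0$. Random Threshold (on reports $\mathbf{s}$): choose $\ell$ uniformly in $\{1,\dots,k-1\}$; $N_{\ge\ell}=\{i:s_i\ge\ell\}$, $N_{<\ell}=[n]\setminus N_{\ge\ell}$; for $i\in N_{\ge\ell}$ set $\bar v_{iT}=v_{iT}(\mathbf{s}_{N_{<\ell}},\boldsymbol{\ell}_{N_{\ge\ell}})$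 (signals of all agents in $N_{\ge\ell}$ replaced by $\ell$), for $i\in N_{<\ell}$ set $\bar v_{iT}=0$; choose $\bar T\in\arg\max\sum_{i\in N_{\ge\ell}}\bar v_{i\bar T_i}$ over allocations to agents of $N_{\ge\ell}$; an agent receiving $\bar T_i$ pays $v_{i\bar T_i}(\mathbf{s}_{-i},\ell-1)$. *)

theory Defs
  imports Complex_Main "HOL-Library.Disjoint_Sets"
begin

text \<open>Agents are 0..<n, items are 0..<m, signals are naturals in {0..<k}.
  A valuation system is v :: nat => nat set => (nat => nat) => real, v i T s = v_{iT}(s).\<close>

definition profile :: "nat \<Rightarrow> nat \<Rightarrow> (nat \<Rightarrow> nat) \<Rightarrow> bool" where
  "profile n k s \<longleftrightarrow> (\<forall>j<n. s j < k) \<and> (\<forall>j. n \<le> j \<longrightarrow> s j = 0)"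

definition val_ok :: "nat \<Rightarrow> nat \<Rightarrow> ((nat \<Rightarrow> nat) \<Rightarrow> real) \<Rightarrow> nat \<Rightarrow> bool" where
  "val_ok n k f i \<longleftrightarrow>
     (\<forall>s. profile n k s \<longrightarrow> 0 \<le> f s) \<and>
     (\<forall>s s'. profile n k s \<longrightarrow> profile n k s' \<longrightarrow> (\<forall>j<n. s j \<le> s' j) \<longrightarrow> f s \<le> f s') \<and>
     (\<forall>s x. profile n k s \<longrightarrow> s i < x \<longrightarrow> x < k \<longrightarrow> f s < f (s(i := x)))"

definition SOS :: "nat \<Rightarrow> nat \<Rightarrow> ((nat \<Rightarrow> nat) \<Rightarrow> real) \<Rightarrow> bool" where
  "SOS n k f \<longleftrightarrow>
     (\<forall>j<n. \<forall>s s' \<delta>. profile n k s \<longrightarrow> profile n k s' \<longrightarrow> s' j = s j \<longrightarrow>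
        (\<forall>j'<n. j' \<noteq> j \<longrightarrow> s' j' \<le> s j') \<longrightarrow> s j + \<delta> < k \<longrightarrow>
        f (s'(j := s j + \<delta>)) - f s' \<ge> f (s(j := s j + \<delta>)) - f s)"

definition alloc_to :: "nat \<Rightarrow> nat \<Rightarrow> nat set \<Rightarrow> (nat \<Rightarrow> nat set) \<Rightarrow> bool" where
  "alloc_to n m A T \<longleftrightarrow>
     (\<forall>i<n. T i \<subseteq> {0..<m}) \<and> disjoint_family_on T {0..<n} \<and>
     (\<forall>i<n. i \<notin> A \<longrightarrow> T i = {})"

abbreviation alloc :: "nat \<Rightarrow> nat \<Rightarrow> (nat \<Rightarrow> nat set) \<Rightarrow> bool" where
  "alloc n m T \<equiv> alloc_to n m {0..<n} T"

definition welfare :: "nat \<Rightarrow> (nat \<Rightarrow> nat set \<Rightarrow> (nat \<Rightarrow> nat) \<Rightarrow> real) \<Rightarrow> (nat \<Rightarrow> nat set) \<Rightarrow> (nat \<Rightarrow> nat) \<Rightarrow> real" where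
  "welfare n v T s = (\<Sum>i<n. v i (T i) s)"

definition above :: "nat \<Rightarrow> (nat \<Rightarrow> nat) \<Rightarrow> nat \<Rightarrow> nat set" where
  "above n s l = {i. i < n \<and> l \<le> s i}"

definition cap_profile :: "nat \<Rightarrow> (nat \<Rightarrow> nat) \<Rightarrow> nat \<Rightarrow> (nat \<Rightarrow> nat)" where
  "cap_profile n s l = (\<lambda>j. if j < n \<and> l \<le> s j then l else s j)"

definition vbar :: "nat \<Rightarrow> (nat \<Rightarrow> nat set \<Rightarrow> (nat \<Rightarrow> nat) \<Rightarrow> real) \<Rightarrow> (nat \<Rightarrow> nat) \<Rightarrow> nat \<Rightarrow> nat \<Rightarrow> nat set \<Rightarrow> real" where
  "vbar n v s l i T = (if i \<in> above n s l then v i T (cap_profile n s l) else 0)"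

text \<open>Tb is a valid outcome of Random Threshold at threshold l: an allocation to N_{>=l}
  maximising the sum of the surrogate values over such allocations (any tie-breaking).\<close>
definition RT_alloc :: "nat \<Rightarrow> nat \<Rightarrow> (nat \<Rightarrow> nat set \<Rightarrow> (nat \<Rightarrow> nat) \<Rightarrow> real) \<Rightarrow> (nat \<Rightarrow> nat) \<Rightarrow> nat \<Rightarrow> (nat \<Rightarrow> nat set) \<Rightarrow> bool" where
  "RT_alloc n m v s l Tb \<longleftrightarrow>
     alloc_to n m (above n s l) Tb \<and>
     (\<forall>T. alloc_to n m (above n s l) T \<longrightarrow>
        (\<Sum>i\<in>above n s l. vbar n v s l i (T i)) \<le> (\<Sum>i\<in>above n s l. vbar n v s l i (Tb i)))"

text \<open>Expected welfare at true profile s when l is uniform on {1..k-1} and Tb l is the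
  allocation chosen for threshold l.\<close>
definition RT_expected_welfare :: "nat \<Rightarrow> nat \<Rightarrow> (nat \<Rightarrow> nat set \<Rightarrow> (nat \<Rightarrow> nat) \<Rightarrow> real) \<Rightarrow> (nat \<Rightarrow> nat \<Rightarrow> nat set) \<Rightarrow> (nat \<Rightarrow> nat) \<Rightarrow> real" where
  "RT_expected_welfare n k v Tb s = (\<Sum>l\<in>{1..k-1}. welfare n v (Tb l) s) / real (k - 1)"

definition only_own :: "nat \<Rightarrow> (nat \<Rightarrow> nat) \<Rightarrow> (nat \<Rightarrow> nat)" where
  "only_own i s = (\<lambda>j. if j = i then s i else 0)"

definition SELF :: "nat \<Rightarrow> nat \<Rightarrow> (nat \<Rightarrow> nat set \<Rightarrow> (nat \<Rightarrow> nat) \<Rightarrow> real) \<Rightarrow> (nat \<Rightarrow> nat set) \<Rightarrow> (nat \<Rightarrow> nat) \<Rightarrow> real" where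
  "SELF n k v Tstar s = (\<Sum>l\<in>{1..k-1}. \<Sum>i\<in>{i. i < n \<and> s i = l}. v i (Tstar i) (only_own i s))"

end

theory Submission
  imports Defs
begin

theorem mainTheorem6:
  fixes n m k :: nat
    and v :: "nat \<Rightarrow> nat set \<Rightarrow> (nat \<Rightarrow> nat) \<Rightarrow> real"
    and s :: "nat \<Rightarrow> nat"
    and Tstar :: "nat \<Rightarrow> nat set"
    and Tb :: "nat \<Rightarrow> nat \<Rightarrow> nat set"
  assumes "2 \<le> k"
    and "\<And>i T. i < n \<Longrightarrow> T \<subseteq> {0..<m} \<Longrightarrow> val_ok n k (v i T) i"
    and "\<And>i T. i < n \<Longrightarrow> T \<subseteq> {0..<m} \<Longrightarrow> SOS n k (v i T)"
    and "profile n k s"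
    and "alloc n m Tstar"
    and "\<And>T. alloc n m T \<Longrightarrow> welfare n v T s \<le> welfare n v Tstar s"
    and "\<And>l. l \<in> {1..k-1} \<Longrightarrow> RT_alloc n m v s l (Tb l)"
  shows "RT_expected_welfare n k v Tb s \<ge> SELF n k v Tstar s / real (k - 1)"
proof -
  note vok = assms(2)
  have ps: "profile n k s" by fact
  have Ts: "\<And>i. i < n \<Longrightarrow> Tstar i \<subseteq> {0..<m}" using assms(5) unfolding alloc_to_def by blast
  have nonneg: "\<And>i T t. i < n \<Longrightarrow> T \<subseteq> {0..<m} \<Longrightarrow> profile n k t \<Longrightarrow> 0 \<le> v i T t"
    using vok unfolding val_ok_def by blast
  have mono: "\<And>i T t t'. i < n \<Longrightarrow> T \<subseteq> {0..<m} \<Longrightarrow> profile n k t \<Longrightarrow> profile n k t'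
      \<Longrightarrow> (\<forall>j<n. t j \<le> t' j) \<Longrightarrow> v i T t \<le> v i T t'"
    using vok unfolding val_ok_def by blast
  have step: "(\<Sum>i\<in>{i. i < n \<and> s i = l}. v i (Tstar i) (only_own i s)) \<le> welfare n v (Tb l) s"
    if l: "l \<in> {1..k-1}" for l
  proof -
    define c where "c = cap_profile n s l"
    define A where "A = above n s l"
    have pc: "profile n k c" using ps unfolding c_def cap_profile_def profile_def by auto
    have cle: "\<forall>j<n. c j \<le> s j" unfolding c_def cap_profile_def by auto
    have finA: "finite A" unfolding A_def above_def by auto
    have RT: "RT_alloc n m v s l (Tb l)" using assms(7) l by blast
    have Tbs: "\<And>i. i < n \<Longrightarrow> Tb l i \<subseteq> {0..<m}" using RT unfolding RT_alloc_def alloc_to_def by blast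
    define T' where "T' = (\<lambda>i. if i \<in> A then Tstar i else {})"
    have aT': "alloc_to n m A T'"
      using assms(5) unfolding alloc_to_def T'_def disjoint_family_on_def by auto
    have "(\<Sum>i\<in>{i. i < n \<and> s i = l}. v i (Tstar i) (only_own i s))
        \<le> (\<Sum>i\<in>{i. i < n \<and> s i = l}. v i (Tstar i) c)"
    proof (rule sum_mono)
      fix i assume "i \<in> {i. i < n \<and> s i = l}"
      hence i: "i < n" "s i = l" by auto
      have po: "profile n k (only_own i s)" using ps i unfolding profile_def only_own_def by auto
      have "\<forall>j<n. only_own i s j \<le> c j" using i unfolding only_own_def c_def cap_profile_def by auto
      thus "v i (Tstar i) (only_own i s) \<le> v i (Tstar i) c" using mono[OF i(1) Ts[OF i(1)] po pc] by blast
    qed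
    also have "\<dots> \<le> (\<Sum>i\<in>A. v i (Tstar i) c)"
      by (rule sum_mono2[OF finA]) (auto simp: A_def above_def intro!: nonneg Ts pc)
    also have "\<dots> = (\<Sum>i\<in>A. vbar n v s l i (T' i))"
      by (rule sum.cong) (auto simp: vbar_def T'_def A_def c_def)
    also have "\<dots> \<le> (\<Sum>i\<in>A. vbar n v s l i (Tb l i))"
      using RT aT' unfolding RT_alloc_def A_def by blast
    also have "\<dots> = (\<Sum>i\<in>A. v i (Tb l i) c)"
      by (rule sum.cong) (auto simp: vbar_def A_def c_def)
    also have "\<dots> \<le> (\<Sum>i\<in>A. v i (Tb l i) s)"
      by (rule sum_mono) (auto simp: A_def above_def intro!: mono Tbs pc ps cle)
    also have "\<dots> \<le> (\<Sum>i<n. v i (Tb l i) s)"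
      by (rule sum_mono2) (auto simp: A_def above_def intro!: nonneg Tbs ps)
    finally show ?thesis unfolding welfare_def .
  qed
  have "SELF n k v Tstar s \<le> (\<Sum>l\<in>{1..k-1}. welfare n v (Tb l) s)"
    unfolding SELF_def by (rule sum_mono) (rule step)
  thus ?thesis unfolding RT_expected_welfare_def
    by (simp add: divide_right_mono)
qed

end
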